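(* Let $\mathcal{H}$ be a quasitriangular Hopf algebra with universal R-matrix $\mathcal{R}=\mathcal{R}_1\otimes\mathcal{R}_2$, and let $\mathcal{L}$ be a left $\mathcal{H}$-module algebra which is quasi-commutative, i.e. $(\mathcal{R}_2\triangleright\ell_2)(\mathcal{R}_1\triangleright\ell_1)=\ell_1\ell_2$ for all $\ell_1,\ell_2\in\mathcal{L}$. Then $\mathcal{L}$ is an $\mathcal{H}$-base algebra with the left $\mathcal{H}$-coaction $\delta(\ell):=\mathcal{R}_2\otimes\mathcal{R}_1\triangleright\ell$.
   Context: $\mathcal{H}$ is a Hopf algebra over a commutative ring $k$ (over a field of characteristic zero), with Sweedler notation $\Delta(x)=x^{(1)}\otimes x^{(2)}$; the universal R-matrix satisfies $\mathcal{R}\Delta(h)=\Delta^{op}(h)\mathcal{R}$, $(\Delta\otimes\mathrm{id})(\mathcal{R})=\mathcal{R}_{13}\mathcal{R}_{23}$, $(\mathrm{id}\otimes\Delta)(\mathcal{R})=\mathcal{R}_{13}\mathcal{R}_{12}$ (summation over the components of $\mathcal{R}$ implicit). An $\mathcal{H}$-base algebra is a left $\mathcal{H}$-module algebra and left $\mathcal{H}$-comodule algebra $\mathcal{L}$ (action $\triangleright$, coaction $\delta(\ell)=\ell^{(1)}\otimes\ell^{[2]}$ an algebra homomorphism) satisfying $\{x^{(1)}\triangleright\ell\}^{(1)}x^{(2)}\otimes\{x^{(1)}\triangleright\ell\}^{[2]}=x^{(1)}\ell^{(1)}\otimes x^{(2)}\triangleright\ell^{[2]}$ for all $x\in\mathcal{H}$,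 $\ell\in\mathcal{L}$, and $\ell_1\ell_2=(\ell_1^{(1)}\triangleright\ell_2)\ell_1^{[2]}$ for all $\ell_1,\ell_2\in\mathcal{L}$. *)

theory Defs
  imports Main
begin

definition kalg :: "('k::comm_ring_1 \<Rightarrow> 'a::ring_1 \<Rightarrow> 'a) \<Rightarrow> bool" where
  "kalg s \<longleftrightarrow>
     (\<forall>c x y. s c (x + y) = s c x + s c y) \<and>
     (\<forall>c d x. s (c + d) x = s c x + s d x) \<and>
     (\<forall>c d x. s (c * d) x = s c (s d x)) \<and>
     (\<forall>x. s 1 x = x) \<and>
     (\<forall>c x y. s c (x * y) = s c x * y) \<and>
     (\<forall>c x y. s c (x * y) = x * s c y)"

text \<open>An element of a tensor product is represented by a finite list of simple
  tensors (Sweedler-style sum).  Its image in the free k-module on the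
  tuples is fsum; two representatives denote the same tensor iff their
  difference lies in the k-span of the multilinearity relations.\<close>

definition fsum :: "'x list \<Rightarrow> 'x \<Rightarrow> 'k::comm_ring_1" where
  "fsum xs = (\<lambda>z. sum_list (map (\<lambda>p. if p = z then 1 else 0) xs))"

definition gen :: "'x \<Rightarrow> 'x \<Rightarrow> 'k::comm_ring_1" where
  "gen z0 = (\<lambda>z. if z = z0 then 1 else 0)"

inductive_set tnull2 :: "('k::comm_ring_1 \<Rightarrow> 'a::ab_group_add \<Rightarrow> 'a) \<Rightarrow>
    ('k \<Rightarrow> 'b::ab_group_add \<Rightarrow> 'b) \<Rightarrow> ('a \<times> 'b \<Rightarrow> 'k) set"
  for sA sB where
  zero2: "(\<lambda>z. 0) \<in> tnull2 sA sB"
| add2: "p \<in> tnull2 sA sB \<Longrightarrow> q \<in> tnull2 sA sB \<Longrightarrow> (\<lambda>z. p z + q z) \<in> tnull2 sA sB"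
| smul2: "p \<in> tnull2 sA sB \<Longrightarrow> (\<lambda>z. c * p z) \<in> tnull2 sA sB"
| addA2: "(\<lambda>z. gen (a + a', b) z - gen (a, b) z - gen (a', b) z) \<in> tnull2 sA sB"
| addB2: "(\<lambda>z. gen (a, b + b') z - gen (a, b) z - gen (a, b') z) \<in> tnull2 sA sB"
| sclA2: "(\<lambda>z. gen (sA c a, b) z - c * gen (a, b) z) \<in> tnull2 sA sB"
| sclB2: "(\<lambda>z. gen (a, sB c b) z - c * gen (a, b) z) \<in> tnull2 sA sB"

inductive_set tnull3 :: "('k::comm_ring_1 \<Rightarrow> 'a::ab_group_add \<Rightarrow> 'a) \<Rightarrow>
    ('k \<Rightarrow> 'b::ab_group_add \<Rightarrow> 'b) \<Rightarrow> ('k \<Rightarrow> 'c::ab_group_add \<Rightarrow> 'c) \<Rightarrow>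
    ('a \<times> 'b \<times> 'c \<Rightarrow> 'k) set"
  for sA sB sC where
  zero3: "(\<lambda>z. 0) \<in> tnull3 sA sB sC"
| add3: "p \<in> tnull3 sA sB sC \<Longrightarrow> q \<in> tnull3 sA sB sC \<Longrightarrow> (\<lambda>z. p z + q z) \<in> tnull3 sA sB sC"
| smul3: "p \<in> tnull3 sA sB sC \<Longrightarrow> (\<lambda>z. c * p z) \<in> tnull3 sA sB sC"
| addA3: "(\<lambda>z. gen (a + a', b, d) z - gen (a, b, d) z - gen (a', b, d) z) \<in> tnull3 sA sB sC"
| addB3: "(\<lambda>z. gen (a, b + b', d) z - gen (a, b, d) z - gen (a, b', d) z) \<in> tnull3 sA sB sC"
| addC3: "(\<lambda>z. gen (a, b, d + d') z - gen (a, b, d) z - gen (a, b, d') z) \<in> tnull3 sA sB sC"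
| sclA3: "(\<lambda>z. gen (sA c a, b, d) z - c * gen (a, b, d) z) \<in> tnull3 sA sB sC"
| sclB3: "(\<lambda>z. gen (a, sB c b, d) z - c * gen (a, b, d) z) \<in> tnull3 sA sB sC"
| sclC3: "(\<lambda>z. gen (a, b, sC c d) z - c * gen (a, b, d) z) \<in> tnull3 sA sB sC"

definition tens2_eq :: "('k::comm_ring_1 \<Rightarrow> 'a::ab_group_add \<Rightarrow> 'a) \<Rightarrow>
    ('k \<Rightarrow> 'b::ab_group_add \<Rightarrow> 'b) \<Rightarrow> ('a \<times> 'b) list \<Rightarrow> ('a \<times> 'b) list \<Rightarrow> bool" where
  "tens2_eq sA sB xs ys \<longleftrightarrow> (\<lambda>z. fsum xs z - fsum ys z) \<in> tnull2 sA sB"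

definition tens3_eq :: "('k::comm_ring_1 \<Rightarrow> 'a::ab_group_add \<Rightarrow> 'a) \<Rightarrow>
    ('k \<Rightarrow> 'b::ab_group_add \<Rightarrow> 'b) \<Rightarrow> ('k \<Rightarrow> 'c::ab_group_add \<Rightarrow> 'c) \<Rightarrow>
    ('a \<times> 'b \<times> 'c) list \<Rightarrow> ('a \<times> 'b \<times> 'c) list \<Rightarrow> bool" where
  "tens3_eq sA sB sC xs ys \<longleftrightarrow> (\<lambda>z. fsum xs z - fsum ys z) \<in> tnull3 sA sB sC"

definition hopf_algebra ::
  "('k::comm_ring_1 \<Rightarrow> 'h::ring_1 \<Rightarrow> 'h) \<Rightarrow> ('h \<Rightarrow> ('h \<times> 'h) list) \<Rightarrow> ('h \<Rightarrow> 'k) \<Rightarrow> ('h \<Rightarrow> 'h) \<Rightarrow> bool" where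
  "hopf_algebra sH D eps S \<longleftrightarrow>
     kalg sH \<and>
     (\<forall>x y. tens2_eq sH sH (D (x + y)) (D x @ D y)) \<and>
     (\<forall>c x. tens2_eq sH sH (D (sH c x)) [(sH c a, b). (a, b) \<leftarrow> D x]) \<and>
     (\<forall>x y. tens2_eq sH sH (D (x * y)) [(a * a', b * b'). (a, b) \<leftarrow> D x, (a', b') \<leftarrow> D y]) \<and>
     tens2_eq sH sH (D 1) [(1, 1)] \<and>
     (\<forall>x. tens3_eq sH sH sH [(a1, a2, b). (a, b) \<leftarrow> D x, (a1, a2) \<leftarrow> D a]
                            [(a, b1, b2). (a, b) \<leftarrow> D x, (b1, b2) \<leftarrow> D b]) \<and>
     (\<forall>x y. eps (x + y) = eps x + eps y) \<and>
     (\<forall>c x. eps (sH c x) = c * eps x) \<and>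
     (\<forall>x y. eps (x * y) = eps x * eps y) \<and>
     eps 1 = 1 \<and>
     (\<forall>x. sum_list (map (\<lambda>(a, b). sH (eps a) b) (D x)) = x) \<and>
     (\<forall>x. sum_list (map (\<lambda>(a, b). sH (eps b) a) (D x)) = x) \<and>
     (\<forall>x y. S (x + y) = S x + S y) \<and>
     (\<forall>c x. S (sH c x) = sH c (S x)) \<and>
     (\<forall>x. sum_list (map (\<lambda>(a, b). S a * b) (D x)) = sH (eps x) 1) \<and>
     (\<forall>x. sum_list (map (\<lambda>(a, b). a * S b) (D x)) = sH (eps x) 1)"

text \<open>Universal R-matrix, R = sum of R1 \<otimes> R2 given by the list R.\<close>
definition quasitriangular ::
  "('k::comm_ring_1 \<Rightarrow> 'h::ring_1 \<Rightarrow> 'h) \<Rightarrow> ('h \<Rightarrow> ('h \<times> 'h) list) \<Rightarrow> ('h \<times> 'h) list \<Rightarrow> bool" where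
  "quasitriangular sH D R \<longleftrightarrow>
     (\<forall>x. tens2_eq sH sH [(r1 * a, r2 * b). (r1, r2) \<leftarrow> R, (a, b) \<leftarrow> D x]
                          [(b * r1, a * r2). (a, b) \<leftarrow> D x, (r1, r2) \<leftarrow> R]) \<and>
     tens3_eq sH sH sH [(a1, a2, r2). (r1, r2) \<leftarrow> R, (a1, a2) \<leftarrow> D r1]
                       [(r1, r1', r2 * r2'). (r1, r2) \<leftarrow> R, (r1', r2') \<leftarrow> R] \<and>
     tens3_eq sH sH sH [(r1, b1, b2). (r1, r2) \<leftarrow> R, (b1, b2) \<leftarrow> D r2]
                       [(r1 * r1', r2', r2). (r1, r2) \<leftarrow> R, (r1', r2') \<leftarrow> R]"

definition module_algebra ::
  "('k::comm_ring_1 \<Rightarrow> 'h::ring_1 \<Rightarrow> 'h) \<Rightarrow> ('k \<Rightarrow> 'l::ring_1 \<Rightarrow> 'l) \<Rightarrow>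
   ('h \<Rightarrow> ('h \<times> 'h) list) \<Rightarrow> ('h \<Rightarrow> 'k) \<Rightarrow> ('h \<Rightarrow> 'l \<Rightarrow> 'l) \<Rightarrow> bool" where
  "module_algebra sH sL D eps act \<longleftrightarrow>
     kalg sL \<and>
     (\<forall>x y l. act (x + y) l = act x l + act y l) \<and>
     (\<forall>c x l. act (sH c x) l = sL c (act x l)) \<and>
     (\<forall>x l l'. act x (l + l') = act x l + act x l') \<and>
     (\<forall>c x l. act x (sL c l) = sL c (act x l)) \<and>
     (\<forall>x y l. act (x * y) l = act x (act y l)) \<and>
     (\<forall>l. act 1 l = l) \<and>
     (\<forall>x l l'. act x (l * l') = sum_list (map (\<lambda>(a, b). act a l * act b l') (D x))) \<and>
     (\<forall>x. act x 1 = sL (eps x) 1)"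

text \<open>dl l is a representative of the coaction value, a list of pairs
  (l^(1), l^[2]) in H \<times> L.\<close>
definition comodule_algebra ::
  "('k::comm_ring_1 \<Rightarrow> 'h::ring_1 \<Rightarrow> 'h) \<Rightarrow> ('k \<Rightarrow> 'l::ring_1 \<Rightarrow> 'l) \<Rightarrow>
   ('h \<Rightarrow> ('h \<times> 'h) list) \<Rightarrow> ('h \<Rightarrow> 'k) \<Rightarrow> ('l \<Rightarrow> ('h \<times> 'l) list) \<Rightarrow> bool" where
  "comodule_algebra sH sL D eps dl \<longleftrightarrow>
     kalg sL \<and>
     (\<forall>l l'. tens2_eq sH sL (dl (l + l')) (dl l @ dl l')) \<and>
     (\<forall>c l. tens2_eq sH sL (dl (sL c l)) [(a, sL c m). (a, m) \<leftarrow> dl l]) \<and>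
     (\<forall>l. tens3_eq sH sH sL [(a1, a2, m). (a, m) \<leftarrow> dl l, (a1, a2) \<leftarrow> D a]
                            [(a, b, m'). (a, m) \<leftarrow> dl l, (b, m') \<leftarrow> dl m]) \<and>
     (\<forall>l. sum_list (map (\<lambda>(a, m). sL (eps a) m) (dl l)) = l) \<and>
     (\<forall>l l'. tens2_eq sH sL (dl (l * l')) [(a * a', m * m'). (a, m) \<leftarrow> dl l, (a', m') \<leftarrow> dl l']) \<and>
     tens2_eq sH sL (dl 1) [(1, 1)]"

definition base_algebra ::
  "('k::comm_ring_1 \<Rightarrow> 'h::ring_1 \<Rightarrow> 'h) \<Rightarrow> ('k \<Rightarrow> 'l::ring_1 \<Rightarrow> 'l) \<Rightarrow>
   ('h \<Rightarrow> ('h \<times> 'h) list) \<Rightarrow> ('h \<Rightarrow> 'k) \<Rightarrow> ('h \<Rightarrow> 'l \<Rightarrow> 'l) \<Rightarrow> ('l \<Rightarrow> ('h \<times> 'l) list) \<Rightarrow> bool" where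
  "base_algebra sH sL D eps act dl \<longleftrightarrow>
     module_algebra sH sL D eps act \<and>
     comodule_algebra sH sL D eps dl \<and>
     (\<forall>x l. tens2_eq sH sL [(c * a2, m). (a1, a2) \<leftarrow> D x, (c, m) \<leftarrow> dl (act a1 l)]
                           [(a1 * c, act a2 m). (a1, a2) \<leftarrow> D x, (c, m) \<leftarrow> dl l]) \<and>
     (\<forall>l1 l2. l1 * l2 = sum_list (map (\<lambda>(c, m). act c l2 * m) (dl l1)))"

end

theory Submission
  imports Defs "HOL.Modules" "HOL-Library.Function_Algebras" "HOL-Library.Multiset"
begin


definition ev :: "('k::comm_ring_1 \<Rightarrow> 'm::ab_group_add \<Rightarrow> 'm) \<Rightarrow> ('x \<Rightarrow> 'm) \<Rightarrow> ('x \<Rightarrow> 'k) \<Rightarrow> 'm" where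
  "ev s f p = (\<Sum>z\<in>{z. p z \<noteq> 0}. s (p z) (f z))"

lemma sl_add:
  fixes h :: "'a::monoid_add \<Rightarrow> 'b::ab_group_add"
  assumes "\<And>x y. h (x + y) = h x + h y"
  shows "h (sum_list (map g xs)) = sum_list (map (\<lambda>x. h (g x)) xs)"
proof -
  have h0: "h 0 = 0" using assms[of 0 0] by simp
  show ?thesis by (induction xs) (simp_all add: h0 assms)
qed

context module
begin

lemma ev_sup:
  assumes "finite F" "{z. p z \<noteq> 0} \<subseteq> F"
  shows "ev scale f p = (\<Sum>z\<in>F. scale (p z) (f z))"
  unfolding ev_def
  by (rule sum.mono_neutral_left) (use assms in auto)

lemma ev_add:
  assumes "finite {z. p z \<noteq> 0}" "finite {z. q z \<noteq> 0}"
  shows "ev scale f (\<lambda>z. p z + q z) = ev scale f p + ev scale f q"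
proof -
  let ?F = "{z. p z \<noteq> 0} \<union> {z. q z \<noteq> 0}"
  have "ev scale f (\<lambda>z. p z + q z) = (\<Sum>z\<in>?F. scale (p z + q z) (f z))"
    by (rule ev_sup) (use assms in auto)
  also have "\<dots> = (\<Sum>z\<in>?F. scale (p z) (f z)) + (\<Sum>z\<in>?F. scale (q z) (f z))"
    by (simp add: scale_left_distrib sum.distrib)
  also have "\<dots> = ev scale f p + ev scale f q"
    using assms by (simp add: ev_sup[of ?F p] ev_sup[of ?F q])
  finally show ?thesis .
qed

lemma ev_diff:
  assumes "finite {z. p z \<noteq> 0}" "finite {z. q z \<noteq> 0}"
  shows "ev scale f (\<lambda>z. p z - q z) = ev scale f p - ev scale f q"
proof -
  let ?F = "{z. p z \<noteq> 0} \<union> {z. q z \<noteq> 0}"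
  have "ev scale f (\<lambda>z. p z - q z) = (\<Sum>z\<in>?F. scale (p z - q z) (f z))"
    by (rule ev_sup) (use assms in auto)
  also have "\<dots> = (\<Sum>z\<in>?F. scale (p z) (f z)) - (\<Sum>z\<in>?F. scale (q z) (f z))"
    by (simp only: scale_left_diff_distrib sum_subtractf)
  also have "\<dots> = ev scale f p - ev scale f q"
    using assms by (simp add: ev_sup[of ?F p] ev_sup[of ?F q])
  finally show ?thesis .
qed

lemma scale_sum_right': "scale c (sum g A) = (\<Sum>a\<in>A. scale c (g a))"
  by (induction A rule: infinite_finite_induct) (simp_all add: scale_right_distrib)

lemma ev_smul:
  assumes "finite {z. p z \<noteq> 0}"
  shows "ev scale f (\<lambda>z. c * p z) = scale c (ev scale f p)"
proof -
  let ?F = "{z. p z \<noteq> 0}"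
  have "ev scale f (\<lambda>z. c * p z) = (\<Sum>z\<in>?F. scale (c * p z) (f z))"
    by (rule ev_sup) (use assms in auto)
  also have "\<dots> = scale c (ev scale f p)"
    using assms by (simp add: ev_sup[of ?F p] scale_sum_right')
  finally show ?thesis .
qed

lemma ev_pt: "ev scale f (\<lambda>z. if z = z0 then 1 else 0) = f z0"
  by (subst ev_sup[of "{z0}"]) auto

lemma ev_gen: "ev scale f (gen z0) = f z0"
  unfolding gen_def by (rule ev_pt)

lemma ev_zero: "ev scale f (\<lambda>z. 0) = 0"
  by (simp add: ev_def)

lemma fin_gen: "finite {z. gen z0 z \<noteq> (0::'a)}"
  by (rule finite_subset[of _ "{z0}"]) (auto simp: gen_def)

lemma ev_gen3: "ev scale f (\<lambda>z. gen z1 z - gen z2 z - gen z3 z) = f z1 - f z2 - f z3"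
  apply (subst ev_diff)
    apply (rule finite_subset[of _ "{z1,z2}"], auto simp: gen_def)[1]
   apply (rule fin_gen)
  apply (subst ev_diff) apply (rule fin_gen)+
  by (simp add: ev_gen)

lemma ev_gen_scl: "ev scale f (\<lambda>z. gen z1 z - c * gen z2 z) = f z1 - scale c (f z2)"
  apply (subst ev_diff)
    apply (rule fin_gen)
   apply (rule finite_subset[of _ "{z2}"], auto simp: gen_def)[1]
  by (simp add: ev_smul fin_gen ev_gen)

end

lemma fin_tnull2: "p \<in> tnull2 sA sB \<Longrightarrow> finite {z. p z \<noteq> 0}"
proof (induction rule: tnull2.induct)
  case (add2 p q) have "{z. p z + q z \<noteq> 0} \<subseteq> {z. p z \<noteq> 0} \<union> {z. q z \<noteq> 0}" by auto then show ?case using add2 by (meson finite_UnI finite_subset)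
next
  case (smul2 p c) show ?case by (rule finite_subset[of _ "{z. p z \<noteq> 0}"]) (use smul2 in auto)
next
  case (addA2 a a' b) show ?case by (rule finite_subset[of _ "{(a+a',b),(a,b),(a',b)}"]) (auto simp: gen_def)
next
  case (addB2 a b b') show ?case by (rule finite_subset[of _ "{(a,b+b'),(a,b),(a,b')}"]) (auto simp: gen_def)
next
  case (sclA2 c a b) show ?case by (rule finite_subset[of _ "{(sA c a,b),(a,b)}"]) (auto simp: gen_def)
next
  case (sclB2 a c b) show ?case by (rule finite_subset[of _ "{(a,sB c b),(a,b)}"]) (auto simp: gen_def)
qed simp

lemma fin_tnull3: "p \<in> tnull3 sA sB sC \<Longrightarrow> finite {z. p z \<noteq> 0}"
proof (induction rule: tnull3.induct)
  case (add3 p q) have "{z. p z + q z \<noteq> 0} \<subseteq> {z. p z \<noteq> 0} \<union> {z. q z \<noteq> 0}" by auto then show ?case using add3 by (meson finite_UnI finite_subset)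
next
  case (smul3 p c) show ?case by (rule finite_subset[of _ "{z. p z \<noteq> 0}"]) (use smul3 in auto)
next
  case (addA3 a a' b d) show ?case by (rule finite_subset[of _ "{(a+a',b,d),(a,b,d),(a',b,d)}"]) (auto simp: gen_def)
next
  case (addB3 a b b' d) show ?case by (rule finite_subset[of _ "{(a,b+b',d),(a,b,d),(a,b',d)}"]) (auto simp: gen_def)
next
  case (addC3 a b d d') show ?case by (rule finite_subset[of _ "{(a,b,d+d'),(a,b,d),(a,b,d')}"]) (auto simp: gen_def)
next
  case (sclA3 c a b d) show ?case by (rule finite_subset[of _ "{(sA c a,b,d),(a,b,d)}"]) (auto simp: gen_def)
next
  case (sclB3 a c b d) show ?case by (rule finite_subset[of _ "{(a,sB c b,d),(a,b,d)}"]) (auto simp: gen_def)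
next
  case (sclC3 a b c d) show ?case by (rule finite_subset[of _ "{(a,b,sC c d),(a,b,d)}"]) (auto simp: gen_def)
qed simp

context module
begin

lemma ev_tnull2:
  assumes N0: "0 \<in> N" and Nadd: "\<And>x y. x \<in> N \<Longrightarrow> y \<in> N \<Longrightarrow> x + y \<in> N"
    and Nsc: "\<And>c x. x \<in> N \<Longrightarrow> scale c x \<in> N"
    and gA: "\<And>a a' b. f (a+a', b) - f (a,b) - f (a',b) \<in> N"
    and gB: "\<And>a b b'. f (a, b+b') - f (a,b) - f (a,b') \<in> N"
    and cA: "\<And>c a b. f (sA c a, b) - scale c (f (a,b)) \<in> N"
    and cB: "\<And>c a b. f (a, sB c b) - scale c (f (a,b)) \<in> N"
  shows "p \<in> tnull2 sA sB \<Longrightarrow> ev scale f p \<in> N"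
proof (induction rule: tnull2.induct)
  case zero2 then show ?case by (simp add: ev_zero N0)
next
  case (add2 p q) then show ?case by (simp add: ev_add fin_tnull2 Nadd)
next
  case (smul2 p c) then show ?case by (simp add: ev_smul fin_tnull2 Nsc)
qed (simp_all only: ev_gen3 ev_gen_scl gA gB cA cB)

lemma ev_tnull3:
  assumes N0: "0 \<in> N" and Nadd: "\<And>x y. x \<in> N \<Longrightarrow> y \<in> N \<Longrightarrow> x + y \<in> N"
    and Nsc: "\<And>c x. x \<in> N \<Longrightarrow> scale c x \<in> N"
    and gA: "\<And>a a' b d. f (a+a', b, d) - f (a,b,d) - f (a',b,d) \<in> N"
    and gB: "\<And>a b b' d. f (a, b+b', d) - f (a,b,d) - f (a,b',d) \<in> N"
    and gC: "\<And>a b d d'. f (a, b, d+d') - f (a,b,d) - f (a,b,d') \<in> N"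
    and cA: "\<And>c a b d. f (sA c a, b, d) - scale c (f (a,b,d)) \<in> N"
    and cB: "\<And>c a b d. f (a, sB c b, d) - scale c (f (a,b,d)) \<in> N"
    and cC: "\<And>c a b d. f (a, b, sC c d) - scale c (f (a,b,d)) \<in> N"
  shows "p \<in> tnull3 sA sB sC \<Longrightarrow> ev scale f p \<in> N"
proof (induction rule: tnull3.induct)
  case zero3 then show ?case by (simp add: ev_zero N0)
next
  case (add3 p q) then show ?case by (simp add: ev_add fin_tnull3 Nadd)
next
  case (smul3 p c) then show ?case by (simp add: ev_smul fin_tnull3 Nsc)
qed (simp_all only: ev_gen3 ev_gen_scl gA gB gC cA cB cC)

end

lemma fsum_Nil: "fsum [] = (\<lambda>z. 0)"
  by (simp add: fsum_def)

lemma fsum_Cons: "fsum (x#xs) = (\<lambda>z. (if z = x then 1 else 0) + fsum xs z)"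
  by (auto simp: fsum_def fun_eq_iff)

lemma fsum_append: "fsum (xs @ ys) = (\<lambda>z. fsum xs z + fsum ys z)"
  by (simp add: fsum_def fun_eq_iff)

lemma fin_fsum: "finite {z. (fsum xs z :: 'k::comm_ring_1) \<noteq> 0}"
proof (rule finite_subset[of _ "set xs"])
  show "{z. (fsum xs z :: 'k) \<noteq> 0} \<subseteq> set xs"
    by (induction xs) (auto simp: fsum_Nil fsum_Cons)
qed simp

context module
begin

lemma ev_fsum: "ev scale f (fsum xs) = sum_list (map f xs)"
proof (induction xs)
  case Nil then show ?case by (simp add: fsum_Nil ev_zero)
next
  case (Cons x xs)
  have "finite {z. (if z = x then 1 else 0) \<noteq> (0::'a)}"
    by (rule finite_subset[of _ "{x}"]) auto
  then show ?case
    by (simp add: fsum_Cons ev_add fin_fsum ev_pt Cons)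
qed

lemma tens2_ev:
  assumes T: "tens2_eq sA sB xs ys"
    and N0: "0 \<in> N" and Nadd: "\<And>x y. x \<in> N \<Longrightarrow> y \<in> N \<Longrightarrow> x + y \<in> N"
    and Nsc: "\<And>c x. x \<in> N \<Longrightarrow> scale c x \<in> N"
    and gA: "\<And>a a' b. f (a+a', b) - f (a,b) - f (a',b) \<in> N"
    and gB: "\<And>a b b'. f (a, b+b') - f (a,b) - f (a,b') \<in> N"
    and cA: "\<And>c a b. f (sA c a, b) - scale c (f (a,b)) \<in> N"
    and cB: "\<And>c a b. f (a, sB c b) - scale c (f (a,b)) \<in> N"
  shows "sum_list (map f xs) - sum_list (map f ys) \<in> N"
proof -
  have "ev scale f (\<lambda>z. fsum xs z - fsum ys z) \<in> N"
    using ev_tnull2[OF N0 Nadd Nsc gA gB cA cB] T unfolding tens2_eq_def by blast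
  then show ?thesis by (simp add: ev_diff fin_fsum ev_fsum)
qed

lemma tens3_ev:
  assumes T: "tens3_eq sA sB sC xs ys"
    and N0: "0 \<in> N" and Nadd: "\<And>x y. x \<in> N \<Longrightarrow> y \<in> N \<Longrightarrow> x + y \<in> N"
    and Nsc: "\<And>c x. x \<in> N \<Longrightarrow> scale c x \<in> N"
    and gA: "\<And>a a' b d. f (a+a', b, d) - f (a,b,d) - f (a',b,d) \<in> N"
    and gB: "\<And>a b b' d. f (a, b+b', d) - f (a,b,d) - f (a,b',d) \<in> N"
    and gC: "\<And>a b d d'. f (a, b, d+d') - f (a,b,d) - f (a,b,d') \<in> N"
    and cA: "\<And>c a b d. f (sA c a, b, d) - scale c (f (a,b,d)) \<in> N"
    and cB: "\<And>c a b d. f (a, sB c b, d) - scale c (f (a,b,d)) \<in> N"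
    and cC: "\<And>c a b d. f (a, b, sC c d) - scale c (f (a,b,d)) \<in> N"
  shows "sum_list (map f xs) - sum_list (map f ys) \<in> N"
proof -
  have "ev scale f (\<lambda>z. fsum xs z - fsum ys z) \<in> N"
    using ev_tnull3[OF N0 Nadd Nsc gA gB gC cA cB cC] T unfolding tens3_eq_def by blast
  then show ?thesis by (simp add: ev_diff fin_fsum ev_fsum)
qed

end

lemma module_fun: "module (\<lambda>(c::'k::comm_ring_1) (q::'x \<Rightarrow> 'k). (\<lambda>z. c * q z))"
  by unfold_locales (auto simp: fun_eq_iff algebra_simps)

lemma sum_gen_fsum: "sum_list (map (\<lambda>x. gen (\<phi> x)) xs) = (fsum (map \<phi> xs) :: _ \<Rightarrow> 'k::comm_ring_1)"
  by (induction xs) (auto simp: fsum_Nil fsum_Cons gen_def fun_eq_iff)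

lemma tnull2_add: "p \<in> tnull2 sA sB \<Longrightarrow> q \<in> tnull2 sA sB \<Longrightarrow> p + q \<in> tnull2 sA sB"
  using tnull2.add2[of p sA sB q] by (simp add: plus_fun_def)
lemma tnull3_add: "p \<in> tnull3 sA sB sC \<Longrightarrow> q \<in> tnull3 sA sB sC \<Longrightarrow> p + q \<in> tnull3 sA sB sC"
  using tnull3.add3[of p sA sB sC q] by (simp add: plus_fun_def)
lemma tnull2_0: "0 \<in> tnull2 sA sB"
  using tnull2.zero2 by (simp add: zero_fun_def)
lemma tnull3_0: "0 \<in> tnull3 sA sB sC"
  using tnull3.zero3 by (simp add: zero_fun_def)

lemma tens2_to2:
  fixes sA :: "'k::comm_ring_1 \<Rightarrow> 'a::ab_group_add \<Rightarrow> 'a"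
    and sA' :: "'k::comm_ring_1 \<Rightarrow> 'a2::ab_group_add \<Rightarrow> 'a2"
  assumes T: "tens2_eq sA sB xs ys"
    and gA: "\<And>a a' b. (\<lambda>z. gen (\<phi> (a+a', b)) z - gen (\<phi> (a,b)) z - gen (\<phi> (a',b)) z) \<in> tnull2 sA' sB'"
    and gB: "\<And>a b b'. (\<lambda>z. gen (\<phi> (a, b+b')) z - gen (\<phi> (a,b)) z - gen (\<phi> (a,b')) z) \<in> tnull2 sA' sB'"
    and cA: "\<And>c a b. (\<lambda>z. gen (\<phi> (sA c a, b)) z - c * gen (\<phi> (a,b)) z) \<in> tnull2 sA' sB'"
    and cB: "\<And>c a b. (\<lambda>z. gen (\<phi> (a, sB c b)) z - c * gen (\<phi> (a,b)) z) \<in> tnull2 sA' sB'"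
  shows "tens2_eq sA' sB' (map \<phi> xs) (map \<phi> ys)"
proof -
  interpret F: module "\<lambda>(c::'k) (q::'a2 \<times> 'b2 \<Rightarrow> 'k). (\<lambda>z. c * q z)" by (rule module_fun)
  have "sum_list (map (\<lambda>x. gen (\<phi> x)) xs) - sum_list (map (\<lambda>x. gen (\<phi> x)) ys) \<in> tnull2 sA' sB'"
    by (rule F.tens2_ev[OF T tnull2_0 tnull2_add tnull2.smul2])
       (simp_all only: fun_diff_def gA gB cA cB)
  then show ?thesis unfolding tens2_eq_def sum_gen_fsum by (simp add: fun_diff_def)
qed

lemma tens3_to3:
  fixes sA :: "'k::comm_ring_1 \<Rightarrow> 'a::ab_group_add \<Rightarrow> 'a"
    and sA' :: "'k::comm_ring_1 \<Rightarrow> 'a2::ab_group_add \<Rightarrow> 'a2"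
  assumes T: "tens3_eq sA sB sC xs ys"
    and gA: "\<And>a a' b d. (\<lambda>z. gen (\<phi> (a+a', b, d)) z - gen (\<phi> (a,b,d)) z - gen (\<phi> (a',b,d)) z) \<in> tnull3 sA' sB' sC'"
    and gB: "\<And>a b b' d. (\<lambda>z. gen (\<phi> (a, b+b', d)) z - gen (\<phi> (a,b,d)) z - gen (\<phi> (a,b',d)) z) \<in> tnull3 sA' sB' sC'"
    and gC: "\<And>a b d d'. (\<lambda>z. gen (\<phi> (a, b, d+d')) z - gen (\<phi> (a,b,d)) z - gen (\<phi> (a,b,d')) z) \<in> tnull3 sA' sB' sC'"
    and cA: "\<And>c a b d. (\<lambda>z. gen (\<phi> (sA c a, b, d)) z - c * gen (\<phi> (a,b,d)) z) \<in> tnull3 sA' sB' sC'"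
    and cB: "\<And>c a b d. (\<lambda>z. gen (\<phi> (a, sB c b, d)) z - c * gen (\<phi> (a,b,d)) z) \<in> tnull3 sA' sB' sC'"
    and cC: "\<And>c a b d. (\<lambda>z. gen (\<phi> (a, b, sC c d)) z - c * gen (\<phi> (a,b,d)) z) \<in> tnull3 sA' sB' sC'"
  shows "tens3_eq sA' sB' sC' (map \<phi> xs) (map \<phi> ys)"
proof -
  interpret F: module "\<lambda>(c::'k) (q::'a2 \<times> 'b2 \<times> 'c2 \<Rightarrow> 'k). (\<lambda>z. c * q z)" by (rule module_fun)
  have "sum_list (map (\<lambda>x. gen (\<phi> x)) xs) - sum_list (map (\<lambda>x. gen (\<phi> x)) ys) \<in> tnull3 sA' sB' sC'"
    by (rule F.tens3_ev[OF T tnull3_0 tnull3_add tnull3.smul3])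
       (simp_all only: fun_diff_def gA gB gC cA cB cC)
  then show ?thesis unfolding tens3_eq_def sum_gen_fsum by (simp add: fun_diff_def)
qed

lemma tens3_to2:
  fixes sA :: "'k::comm_ring_1 \<Rightarrow> 'a::ab_group_add \<Rightarrow> 'a"
    and sA' :: "'k::comm_ring_1 \<Rightarrow> 'a2::ab_group_add \<Rightarrow> 'a2"
  assumes T: "tens3_eq sA sB sC xs ys"
    and gA: "\<And>a a' b d. (\<lambda>z. gen (\<phi> (a+a', b, d)) z - gen (\<phi> (a,b,d)) z - gen (\<phi> (a',b,d)) z) \<in> tnull2 sA' sB'"
    and gB: "\<And>a b b' d. (\<lambda>z. gen (\<phi> (a, b+b', d)) z - gen (\<phi> (a,b,d)) z - gen (\<phi> (a,b',d)) z) \<in> tnull2 sA' sB'"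
    and gC: "\<And>a b d d'. (\<lambda>z. gen (\<phi> (a, b, d+d')) z - gen (\<phi> (a,b,d)) z - gen (\<phi> (a,b,d')) z) \<in> tnull2 sA' sB'"
    and cA: "\<And>c a b d. (\<lambda>z. gen (\<phi> (sA c a, b, d)) z - c * gen (\<phi> (a,b,d)) z) \<in> tnull2 sA' sB'"
    and cB: "\<And>c a b d. (\<lambda>z. gen (\<phi> (a, sB c b, d)) z - c * gen (\<phi> (a,b,d)) z) \<in> tnull2 sA' sB'"
    and cC: "\<And>c a b d. (\<lambda>z. gen (\<phi> (a, b, sC c d)) z - c * gen (\<phi> (a,b,d)) z) \<in> tnull2 sA' sB'"
  shows "tens2_eq sA' sB' (map \<phi> xs) (map \<phi> ys)"
proof -
  interpret F: module "\<lambda>(c::'k) (q::'a2 \<times> 'b2 \<Rightarrow> 'k). (\<lambda>z. c * q z)" by (rule module_fun)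
  have "sum_list (map (\<lambda>x. gen (\<phi> x)) xs) - sum_list (map (\<lambda>x. gen (\<phi> x)) ys) \<in> tnull2 sA' sB'"
    by (rule F.tens3_ev[OF T tnull2_0 tnull2_add tnull2.smul2])
       (simp_all only: fun_diff_def gA gB gC cA cB cC)
  then show ?thesis unfolding tens2_eq_def sum_gen_fsum by (simp add: fun_diff_def)
qed

lemma fsum_count: "fsum xs z = (of_nat (count (mset xs) z) :: 'k::comm_ring_1)"
  by (induction xs) (auto simp: fsum_Nil fsum_Cons)

lemma fsum_mset: "mset xs = mset ys \<Longrightarrow> (fsum xs :: _ \<Rightarrow> 'k::comm_ring_1) = fsum ys"
  by (simp add: fun_eq_iff fsum_count)

lemma tens2_refl: "tens2_eq sA sB xs xs"
  unfolding tens2_eq_def by (simp add: tnull2.zero2)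
lemma tens3_refl: "tens3_eq sA sB sC xs xs"
  unfolding tens3_eq_def by (simp add: tnull3.zero3)

lemma tens2_perm: "mset xs = mset ys \<Longrightarrow> tens2_eq sA sB xs ys"
  unfolding tens2_eq_def by (simp add: fsum_count tnull2.zero2)
lemma tens3_perm: "mset xs = mset ys \<Longrightarrow> tens3_eq sA sB sC xs ys"
  unfolding tens3_eq_def by (simp add: fsum_count tnull3.zero3)

lemma tens2_sym: "tens2_eq sA sB xs ys \<Longrightarrow> tens2_eq sA sB ys xs"
proof -
  assume "tens2_eq sA sB xs ys"
  then have "(\<lambda>z. (-1) * (fsum xs z - fsum ys z)) \<in> tnull2 sA sB"
    unfolding tens2_eq_def by (rule tnull2.smul2)
  moreover have "(\<lambda>z. (-1) * (fsum xs z - fsum ys z)) = (\<lambda>z. fsum ys z - fsum xs z)" by (simp add: fun_eq_iff)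
  ultimately show ?thesis unfolding tens2_eq_def by simp
qed
lemma tens2_trans: "tens2_eq sA sB xs ys \<Longrightarrow> tens2_eq sA sB ys zs \<Longrightarrow> tens2_eq sA sB xs zs"
proof -
  assume a: "tens2_eq sA sB xs ys" "tens2_eq sA sB ys zs"
  have "(\<lambda>z. (fsum xs z - fsum ys z) + (fsum ys z - fsum zs z)) \<in> tnull2 sA sB"
    using a unfolding tens2_eq_def by (rule tnull2.add2)
  then show ?thesis unfolding tens2_eq_def by simp
qed
lemma tens3_trans: "tens3_eq sA sB sC xs ys \<Longrightarrow> tens3_eq sA sB sC ys zs \<Longrightarrow> tens3_eq sA sB sC xs zs"
proof -
  assume a: "tens3_eq sA sB sC xs ys" "tens3_eq sA sB sC ys zs"
  have "(\<lambda>z. (fsum xs z - fsum ys z) + (fsum ys z - fsum zs z)) \<in> tnull3 sA sB sC"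
    using a unfolding tens3_eq_def by (rule tnull3.add3)
  then show ?thesis unfolding tens3_eq_def by simp
qed
lemma tens2_app: "tens2_eq sA sB xs ys \<Longrightarrow> tens2_eq sA sB xs' ys' \<Longrightarrow> tens2_eq sA sB (xs @ xs') (ys @ ys')"
proof -
  assume a: "tens2_eq sA sB xs ys" "tens2_eq sA sB xs' ys'"
  have "(\<lambda>z. (fsum xs z - fsum ys z) + (fsum xs' z - fsum ys' z)) \<in> tnull2 sA sB"
    using a unfolding tens2_eq_def by (rule tnull2.add2)
  then show ?thesis unfolding tens2_eq_def fsum_append by (simp add: algebra_simps)
qed

lemma tens2_concat: "(\<And>x. x \<in> set L \<Longrightarrow> tens2_eq sA sB (F x) (G x)) \<Longrightarrow>
  tens2_eq sA sB (concat (map F L)) (concat (map G L))"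
  by (induction L) (simp_all add: tens2_app tens2_refl)

lemma tens2_mapc: "(\<And>x. x \<in> set L \<Longrightarrow> tens2_eq sA sB [F x] [G x]) \<Longrightarrow>
  tens2_eq sA sB (map F L) (map G L)"
proof (induction L)
  case Nil then show ?case by (simp add: tens2_refl)
next
  case (Cons x L)
  have "tens2_eq sA sB ([F x] @ map F L) ([G x] @ map G L)"
    by (rule tens2_app) (use Cons in auto)
  then show ?case by simp
qed

lemma fsum_single: "fsum [x] = gen x"
  by (simp add: fsum_def gen_def fun_eq_iff)

lemma fsum_two: "fsum [x, y] = (\<lambda>z. gen x z + gen y z)"
  by (simp add: fsum_def gen_def fun_eq_iff)

lemma tens2_addB: "tens2_eq sA sB [(a, b+b')] [(a,b),(a,b')]"
proof -
  have eq: "(\<lambda>z. fsum [(a,b+b')] z - fsum [(a,b),(a,b')] z) = (\<lambda>z. gen (a,b+b') z - gen (a,b) z - gen (a,b') z)"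
    by (simp add: fsum_single fsum_two diff_diff_eq)
  show ?thesis unfolding tens2_eq_def by (subst eq) (rule tnull2.addB2)
qed

lemma tens2_addA: "tens2_eq sA sB [(a+a', b)] [(a,b),(a',b)]"
proof -
  have eq: "(\<lambda>z. fsum [(a+a',b)] z - fsum [(a,b),(a',b)] z) = (\<lambda>z. gen (a+a',b) z - gen (a,b) z - gen (a',b) z)"
    by (simp add: fsum_single fsum_two diff_diff_eq)
  show ?thesis unfolding tens2_eq_def by (subst eq) (rule tnull2.addA2)
qed

lemma tens2_zeroB: "tens2_eq sA sB [(a, 0)] []"
proof -
  have "(\<lambda>z. (-1) * (gen (a,0+0) z - gen (a,0) z - gen (a,0) z)) \<in> tnull2 sA sB"
    by (rule tnull2.smul2[OF tnull2.addB2])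
  then show ?thesis unfolding tens2_eq_def by (simp add: fsum_single fsum_Nil)
qed

lemma tens2_zeroA: "tens2_eq sA sB [(0, b)] []"
proof -
  have "(\<lambda>z. (-1) * (gen (0+0,b) z - gen (0,b) z - gen (0,b) z)) \<in> tnull2 sA sB"
    by (rule tnull2.smul2[OF tnull2.addA2])
  then show ?thesis unfolding tens2_eq_def by (simp add: fsum_single fsum_Nil)
qed

lemma tens2_sumB: "tens2_eq sA sB [(a, sum_list (map g ys))] (map (\<lambda>y. (a, g y)) ys)"
proof (induction ys)
  case Nil then show ?case by (simp add: tens2_zeroB)
next
  case (Cons y ys)
  have h1: "tens2_eq sA sB [(a, g y + sum_list (map g ys))] [(a, g y), (a, sum_list (map g ys))]"
    by (rule tens2_addB)
  have h2: "tens2_eq sA sB ([(a, g y)] @ [(a, sum_list (map g ys))]) ([(a, g y)] @ map (\<lambda>y. (a, g y)) ys)"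
    by (rule tens2_app[OF tens2_refl Cons])
  show ?case using tens2_trans[OF h1] h2 by simp
qed

lemma tens2_sumA: "tens2_eq sA sB [(sum_list (map g ys), b)] (map (\<lambda>y. (g y, b)) ys)"
proof (induction ys)
  case Nil then show ?case by (simp add: tens2_zeroA)
next
  case (Cons y ys)
  have h1: "tens2_eq sA sB [(g y + sum_list (map g ys), b)] [(g y, b), (sum_list (map g ys), b)]"
    by (rule tens2_addA)
  have h2: "tens2_eq sA sB ([(g y, b)] @ [(sum_list (map g ys), b)]) ([(g y, b)] @ map (\<lambda>y. (g y, b)) ys)"
    by (rule tens2_app[OF tens2_refl Cons])
  show ?case using tens2_trans[OF h1] h2 by simp
qed

lemma tens2_scl: "tens2_eq sA sB [(a, sB c b)] [(sA c a, b)]"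
proof -
  have eq: "(\<lambda>z. fsum [(a, sB c b)] z - fsum [(sA c a, b)] z) =
     (\<lambda>z. (\<lambda>z. gen (a, sB c b) z - c * gen (a,b) z) z + (\<lambda>z. (-1) * (\<lambda>z. gen (sA c a, b) z - c * gen (a,b) z) z) z)"
    by (simp add: fsum_single algebra_simps)
  show ?thesis unfolding tens2_eq_def by (subst eq) (rule tnull2.add2[OF tnull2.sclB2 tnull2.smul2[OF tnull2.sclA2]])
qed



lemma mset_concat_cons: "mset (concat (map (\<lambda>y. h y # G y) B)) = mset (map h B) + mset (concat (map G B))"
  by (induction B) auto

lemma mset_swap: "mset (concat (map (\<lambda>x. map (h x) B) A)) = mset (concat (map (\<lambda>y. map (\<lambda>x. h x y) A) B))"
proof (induction A)
  case Nil then show ?case by (induction B) auto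
next
  case (Cons a A)
  have "mset (concat (map (\<lambda>y. map (\<lambda>x. h x y) (a # A)) B)) = mset (map (h a) B) + mset (concat (map (\<lambda>y. map (\<lambda>x. h x y) A) B))"
    using mset_concat_cons[of "\<lambda>y. h a y" "\<lambda>y. map (\<lambda>x. h x y) A" B] by simp
  then show ?case using Cons by simp
qed

lemma sum_list_concat_map: "sum_list (map f (concat (map g xs))) = sum_list (map (\<lambda>x. sum_list (map f (g x))) xs)"
  by (induction xs) auto

lemma kalg_module: "kalg s \<Longrightarrow> module s"
  unfolding kalg_def by unfold_locales auto

lemma map_as_concat: "map f xs = concat (map (\<lambda>x. [f x]) xs)"
  by (induction xs) auto



theorem proposition3p6:
  fixes sH :: "'k::comm_ring_1 \<Rightarrow> 'h::ring_1 \<Rightarrow> 'h"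
    and sL :: "'k \<Rightarrow> 'l::ring_1 \<Rightarrow> 'l"
    and D :: "'h \<Rightarrow> ('h \<times> 'h) list"
    and eps :: "'h \<Rightarrow> 'k"
    and S :: "'h \<Rightarrow> 'h"
    and R :: "('h \<times> 'h) list"
    and act :: "'h \<Rightarrow> 'l \<Rightarrow> 'l"
  assumes "hopf_algebra sH D eps S"
    and "quasitriangular sH D R"
    and "module_algebra sH sL D eps act"
    and "\<forall>l1 l2. sum_list (map (\<lambda>(r1, r2). act r2 l2 * act r1 l1) R) = l1 * l2"
  shows "base_algebra sH sL D eps act (\<lambda>l. map (\<lambda>(r1, r2). (r2, act r1 l)) R)"
proof -
  note H = assms(1)[unfolded hopf_algebra_def]
  have kH: "kalg sH" using H by blast
  have epsadd: "\<And>x y. eps (x + y) = eps x + eps y" using H by blast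
  have epsscl: "\<And>c x. eps (sH c x) = c * eps x" using H by blast
  have epsmul: "\<And>x y. eps (x * y) = eps x * eps y" using H by blast
  have cu1: "\<And>x. sum_list (map (\<lambda>(a, b). sH (eps a) b) (D x)) = x" using H by blast
  have Sadd: "\<And>x y. S (x + y) = S x + S y" using H by blast
  have Sscl: "\<And>c x. S (sH c x) = sH c (S x)" using H by blast
  have ant: "\<And>x. sum_list (map (\<lambda>(a, b). S a * b) (D x)) = sH (eps x) 1" using H by blast
  note Q = assms(2)[unfolded quasitriangular_def]
  have Q1: "\<And>x. tens2_eq sH sH [(r1 * a, r2 * b). (r1, r2) \<leftarrow> R, (a, b) \<leftarrow> D x]
                          [(b * r1, a * r2). (a, b) \<leftarrow> D x, (r1, r2) \<leftarrow> R]" using Q by blast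
  have Q2: "tens3_eq sH sH sH [(a1, a2, r2). (r1, r2) \<leftarrow> R, (a1, a2) \<leftarrow> D r1]
                       [(r1, r1', r2 * r2'). (r1, r2) \<leftarrow> R, (r1', r2') \<leftarrow> R]" using Q by blast
  have Q3: "tens3_eq sH sH sH [(r1, b1, b2). (r1, r2) \<leftarrow> R, (b1, b2) \<leftarrow> D r2]
                       [(r1 * r1', r2', r2). (r1, r2) \<leftarrow> R, (r1', r2') \<leftarrow> R]" using Q by blast
  note M = assms(3)[unfolded module_algebra_def]
  have kL: "kalg sL" using M by blast
  have act_addx: "\<And>x y l. act (x + y) l = act x l + act y l" using M by blast
  have act_sclx: "\<And>c x l. act (sH c x) l = sL c (act x l)" using M by blast
  have act_addl: "\<And>x l l'. act x (l + l') = act x l + act x l'" using M by blast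
  have act_scll: "\<And>c x l. act x (sL c l) = sL c (act x l)" using M by blast
  have act_mul: "\<And>x y l. act (x * y) l = act x (act y l)" using M by blast
  have act_one: "\<And>l. act 1 l = l" using M by blast
  have act_prod: "\<And>x l l'. act x (l * l') = sum_list (map (\<lambda>(a, b). act a l * act b l') (D x))" using M by blast
  have act_unit: "\<And>x. act x 1 = sL (eps x) 1" using M by blast
  have QC: "\<And>l1 l2. sum_list (map (\<lambda>(r1, r2). act r2 l2 * act r1 l1) R) = l1 * l2" using assms(4) by blast
  interpret mH: module sH by (rule kalg_module[OF kH])
  interpret mL: module sL by (rule kalg_module[OF kL])
  have sHm1: "\<And>c x y. sH c (x * y) = sH c x * y" and sHm2: "\<And>c x y. sH c (x * y) = x * sH c y"
    using kH unfolding kalg_def by blast+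
  have sLm1: "\<And>c x y. sL c (x * y) = sL c x * y" and sLm2: "\<And>c x y. sL c (x * y) = x * sL c y"
    using kL unfolding kalg_def by blast+
  define dl where "dl = (\<lambda>l. map (\<lambda>(r1, r2). (r2, act r1 l)) R)"

  have G_add: "\<forall>l l'. tens2_eq sH sL (dl (l + l')) (dl l @ dl l')"
  proof (intro allI)
    fix l l'
    have e1: "dl (l + l') = concat (map (\<lambda>(r1, r2). [(r2, act r1 l + act r1 l')]) R)"
      unfolding dl_def by (induction R) (auto simp: act_addl)
    have e2: "tens2_eq sH sL (concat (map (\<lambda>(r1, r2). [(r2, act r1 l + act r1 l')]) R))
        (concat (map (\<lambda>(r1, r2). [(r2, act r1 l), (r2, act r1 l')]) R))"
      by (rule tens2_concat) (auto simp: tens2_addB)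
    have e3: "mset (concat (map (\<lambda>(r1, r2). [(r2, act r1 l), (r2, act r1 l')]) R)) = mset (dl l @ dl l')"
      unfolding dl_def by (induction R) auto
    show "tens2_eq sH sL (dl (l + l')) (dl l @ dl l')"
      unfolding e1 using tens2_trans[OF e2 tens2_perm[OF e3]] .
  qed
  have G_scl: "\<forall>c l. tens2_eq sH sL (dl (sL c l)) [(a, sL c m). (a, m) \<leftarrow> dl l]"
  proof (intro allI)
    fix c l
    have "dl (sL c l) = [(a, sL c m). (a, m) \<leftarrow> dl l]"
      by (simp add: dl_def split_def act_scll)
    then show "tens2_eq sH sL (dl (sL c l)) [(a, sL c m). (a, m) \<leftarrow> dl l]" by (simp add: tens2_refl)
  qed
  have G_coass: "\<forall>l. tens3_eq sH sH sL [(a1, a2, m). (a, m) \<leftarrow> dl l, (a1, a2) \<leftarrow> D a]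
                            [(a, b, m'). (a, m) \<leftarrow> dl l, (b, m') \<leftarrow> dl m]"
  proof
    fix l
    define \<phi> where "\<phi> = (\<lambda>(x::'h, y::'h, z::'h). (y, z, act x l))"
    define h where "h = (\<lambda>(x::'h \<times> 'h) (y::'h \<times> 'h). (snd y, snd x, act (fst x * fst y) l))"
    have T: "tens3_eq sH sH sL (map \<phi> [(r1, b1, b2). (r1, r2) \<leftarrow> R, (b1, b2) \<leftarrow> D r2])
                (map \<phi> [(r1 * r1', r2', r2). (r1, r2) \<leftarrow> R, (r1', r2') \<leftarrow> R])"
      apply (rule tens3_to3[OF Q3])
      apply (simp_all add: \<phi>_def act_addx act_sclx)
      apply (rule tnull3.intros)+
      done
    have e1: "map \<phi> [(r1, b1, b2). (r1, r2) \<leftarrow> R, (b1, b2) \<leftarrow> D r2] = [(a1, a2, m). (a, m) \<leftarrow> dl l, (a1, a2) \<leftarrow> D a]"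
      unfolding dl_def \<phi>_def by (simp add: map_concat split_def comp_def)
    have e2: "map \<phi> [(r1 * r1', r2', r2). (r1, r2) \<leftarrow> R, (r1', r2') \<leftarrow> R] = concat (map (\<lambda>x. map (h x) R) R)"
      unfolding h_def \<phi>_def by (simp add: map_concat split_def comp_def)
    have e3: "[(a, b, m'). (a, m) \<leftarrow> dl l, (b, m') \<leftarrow> dl m] = concat (map (\<lambda>y. map (\<lambda>x. h x y) R) R)"
      unfolding h_def dl_def by (simp add: map_concat split_def comp_def act_mul)
    show "tens3_eq sH sH sL [(a1, a2, m). (a, m) \<leftarrow> dl l, (a1, a2) \<leftarrow> D a]
                            [(a, b, m'). (a, m) \<leftarrow> dl l, (b, m') \<leftarrow> dl m]"
      using tens3_trans[OF T[unfolded e1 e2] tens3_perm[OF mset_swap]] unfolding e3 .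
  qed
  have G_cu: "\<forall>l. sum_list (map (\<lambda>(a, m). sL (eps a) m) (dl l)) = l"
  proof
    fix l
    have "map (\<lambda>(a, m). sL (eps a) m) (dl l) = map (\<lambda>(r1, r2). act r2 1 * act r1 l) R"
      by (simp add: dl_def split_def act_unit flip: sLm1)
    then show "sum_list (map (\<lambda>(a, m). sL (eps a) m) (dl l)) = l" using QC[of 1 l] by simp
  qed
  have G_mul: "\<forall>l l'. tens2_eq sH sL (dl (l * l')) [(a * a', m * m'). (a, m) \<leftarrow> dl l, (a', m') \<leftarrow> dl l']"
  proof (intro allI)
    fix l l'
    define \<phi> where "\<phi> = (\<lambda>(x::'h, y::'h, z::'h). (z, act x l * act y l'))"
    define g where "g = (\<lambda>(a::'h, b::'h). act a l * act b l')"
    have T: "tens2_eq sH sL (map \<phi> [(a1, a2, r2). (r1, r2) \<leftarrow> R, (a1, a2) \<leftarrow> D r1])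
                (map \<phi> [(r1, r1', r2 * r2'). (r1, r2) \<leftarrow> R, (r1', r2') \<leftarrow> R])"
      apply (rule tens3_to2[OF Q2])
      apply (simp_all add: \<phi>_def act_addx act_sclx ring_distribs flip: sLm1 sLm2)
      apply (rule tnull2.intros)+
      done
    have t0: "tens2_eq sH sL (concat (map (\<lambda>x. [(snd x, sum_list (map g (D (fst x))))]) R))
       (concat (map (\<lambda>x. map (\<lambda>y. (snd x, g y)) (D (fst x))) R))"
      by (rule tens2_concat) (rule tens2_sumB)
    have e0: "dl (l * l') = concat (map (\<lambda>x. [(snd x, sum_list (map g (D (fst x))))]) R)"
      unfolding dl_def by (induction R) (auto simp: act_prod g_def)
    have e1: "map \<phi> [(a1, a2, r2). (r1, r2) \<leftarrow> R, (a1, a2) \<leftarrow> D r1] = concat (map (\<lambda>x. map (\<lambda>y. (snd x, g y)) (D (fst x))) R)"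
      unfolding g_def \<phi>_def by (simp add: map_concat split_def comp_def)
    have e2: "map \<phi> [(r1, r1', r2 * r2'). (r1, r2) \<leftarrow> R, (r1', r2') \<leftarrow> R] = [(a * a', m * m'). (a, m) \<leftarrow> dl l, (a', m') \<leftarrow> dl l']"
      unfolding dl_def \<phi>_def by (simp add: map_concat split_def comp_def)
    show "tens2_eq sH sL (dl (l * l')) [(a * a', m * m'). (a, m) \<leftarrow> dl l, (a', m') \<leftarrow> dl l']"
      unfolding e0 using tens2_trans[OF t0 T[unfolded e1 e2]] .
  qed
  have G_unit: "tens2_eq sH sL (dl 1) [(1, 1)]"
  proof -
    define g where "g = (\<lambda>(r1::'h, r2::'h). sH (eps r1) r2)"
    define v where "v = sum_list (map g R)"
    define e where "e = eps v"
    have eps_sl: "eps (sum_list (map f xs)) = sum_list (map (\<lambda>x. eps (f x)) xs)" for f xs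
      by (rule sl_add) (rule epsadd)
    have sHl_sl: "sH (sum_list (map f xs)) y = sum_list (map (\<lambda>x. sH (f x) y) xs)" for f xs y
      by (induction xs) (simp_all add: mH.scale_left_distrib)
    have sHr_sl: "sH c (sum_list (map f xs)) = sum_list (map (\<lambda>x. sH c (f x)) xs)" for c f xs
      by (induction xs) (simp_all add: mH.scale_right_distrib)
    have S_sl: "S (sum_list (map f xs)) = sum_list (map (\<lambda>x. S (f x)) xs)" for f xs
      by (rule sl_add) (rule Sadd)
    have mr_sl: "sum_list (map f xs) * (y::'h) = sum_list (map (\<lambda>x. f x * y) xs)" for f xs y
      by (induction xs) (simp_all add: distrib_right)
    have ml_sl: "(y::'h) * sum_list (map f xs) = sum_list (map (\<lambda>x. y * f x) xs)" for f xs y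
      by (induction xs) (simp_all add: distrib_left)
    have act0: "act 0 l = 0" for l using act_addx[of 0 0 l] by simp
    have act_sl: "act (sum_list (map f xs)) l = sum_list (map (\<lambda>x. act (f x) l) xs)" for f xs l
      by (induction xs) (simp_all add: act_addx act0)
    have eps_D: "\<And>x. sum_list (map (\<lambda>(a, b). eps a * eps b) (D x)) = eps x"
    proof -
      fix x
      have "eps x = eps (sum_list (map (\<lambda>(a, b). sH (eps a) b) (D x)))" by (simp add: cu1)
      also have "\<dots> = sum_list (map (\<lambda>(a, b). eps a * eps b) (D x))"
        by (simp add: eps_sl split_def epsscl)
      finally show "sum_list (map (\<lambda>(a, b). eps a * eps b) (D x)) = eps x" by simp
    qed
    have e_def2: "e = sum_list (map (\<lambda>(r1, r2). eps r1 * eps r2) R)"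
      by (simp add: e_def v_def g_def eps_sl split_def epsscl)
    have U1: "\<And>l. act v l = l"
    proof -
      fix l
      have "act v l = sum_list (map (\<lambda>(r1, r2). act r2 l * act r1 1) R)"
        by (simp add: v_def g_def act_sl split_def act_sclx act_unit flip: sLm2)
      then show "act v l = l" using QC[of l 1] by simp
    qed
    have ev2: "sum_list (map (\<lambda>(x, y, z). sH (eps x) (sH (eps y) z)) [(a1, a2, r2). (r1, r2) \<leftarrow> R, (a1, a2) \<leftarrow> D r1])
             - sum_list (map (\<lambda>(x, y, z). sH (eps x) (sH (eps y) z)) [(r1, r1', r2 * r2'). (r1, r2) \<leftarrow> R, (r1', r2') \<leftarrow> R]) \<in> {0}"
      apply (rule mH.tens3_ev[OF Q2])
      apply (simp_all add: epsadd epsscl mH.scale_left_distrib mH.scale_right_distrib mult_ac distrib_left)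
      done
    have "v = v * v"
    proof -
      have in2: "\<And>r1 r2. sum_list (map (\<lambda>(a1, a2). sH (eps a1) (sH (eps a2) r2)) (D r1)) = sH (eps r1) r2"
      proof -
        fix r1 r2
        have "sH (eps r1) r2 = sH (sum_list (map (\<lambda>(a, b). eps a * eps b) (D r1))) r2" by (simp add: eps_D)
        also have "\<dots> = sum_list (map (\<lambda>(a1, a2). sH (eps a1) (sH (eps a2) r2)) (D r1))"
          by (simp add: sHl_sl split_def)
        finally show "sum_list (map (\<lambda>(a1, a2). sH (eps a1) (sH (eps a2) r2)) (D r1)) = sH (eps r1) r2" by simp
      qed
      have L: "sum_list (map (\<lambda>(x, y, z). sH (eps x) (sH (eps y) z)) [(a1, a2, r2). (r1, r2) \<leftarrow> R, (a1, a2) \<leftarrow> D r1]) = v"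
        using in2 by (simp add: sum_list_concat_map v_def g_def split_def comp_def)
      have RR: "sum_list (map (\<lambda>(x, y, z). sH (eps x) (sH (eps y) z)) [(r1, r1', r2 * r2'). (r1, r2) \<leftarrow> R, (r1', r2') \<leftarrow> R]) = v * v"
      proof -
        have "v * v = sum_list (map (\<lambda>x. sum_list (map (\<lambda>y. g x * g y) R)) R)"
          unfolding v_def by (simp only: mr_sl) (simp only: ml_sl)
        then show ?thesis by (simp add: sum_list_concat_map g_def split_def comp_def mult.commute flip: sHm1 sHm2)
      qed
      show ?thesis using ev2 L RR by simp
    qed
    have ev3: "sum_list (map (\<lambda>(x, y, z). sH (eps x) (sH (eps y) z)) [(r1, b1, b2). (r1, r2) \<leftarrow> R, (b1, b2) \<leftarrow> D r2])
             - sum_list (map (\<lambda>(x, y, z). sH (eps x) (sH (eps y) z)) [(r1 * r1', r2', r2). (r1, r2) \<leftarrow> R, (r1', r2') \<leftarrow> R]) \<in> {0}"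
      apply (rule mH.tens3_ev[OF Q3])
      apply (simp_all add: epsadd epsscl mH.scale_left_distrib mH.scale_right_distrib mult_ac distrib_left)
      done
    have U3: "v = sH e v"
    proof -
      have in3: "sum_list (map (\<lambda>y. sH (c * eps (fst y)) (snd y)) (D r)) = sH c r" for c r
      proof -
        have "sH c r = sH c (sum_list (map (\<lambda>(a, b). sH (eps a) b) (D r)))" by (simp add: cu1)
        also have "\<dots> = sum_list (map (\<lambda>y. sH (c * eps (fst y)) (snd y)) (D r))"
          by (simp add: sHr_sl split_def)
        finally show ?thesis by simp
      qed
      have L: "sum_list (map (\<lambda>(x, y, z). sH (eps x) (sH (eps y) z)) [(r1, b1, b2). (r1, r2) \<leftarrow> R, (b1, b2) \<leftarrow> D r2]) = v"
        by (simp add: sum_list_concat_map v_def g_def split_def comp_def in3)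
      have RR: "sum_list (map (\<lambda>(x, y, z). sH (eps x) (sH (eps y) z)) [(r1 * r1', r2', r2). (r1, r2) \<leftarrow> R, (r1', r2') \<leftarrow> R]) = sH e v"
      proof -
        have "sH e v = sum_list (map (\<lambda>x. sum_list (map (\<lambda>y. sH ((\<lambda>(r1, r2). eps r1 * eps r2) y) (g x)) R)) R)"
          unfolding e_def2 v_def by (simp only: sHr_sl) (simp only: sHl_sl)
        then show ?thesis by (simp add: sum_list_concat_map g_def split_def comp_def epsmul mult_ac)
      qed
      show ?thesis using ev3 L RR by simp
    qed
    have ev4: "sum_list (map (\<lambda>(x, y, z). sH (eps x) (S y * z)) [(r1, b1, b2). (r1, r2) \<leftarrow> R, (b1, b2) \<leftarrow> D r2])
             - sum_list (map (\<lambda>(x, y, z). sH (eps x) (S y * z)) [(r1 * r1', r2', r2). (r1, r2) \<leftarrow> R, (r1', r2') \<leftarrow> R]) \<in> {0}"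
      apply (rule mH.tens3_ev[OF Q3])
      apply (simp_all add: epsadd epsscl Sadd Sscl mH.scale_left_distrib mH.scale_right_distrib mult_ac distrib_left distrib_right flip: sHm1 sHm2)
      done
    have U4: "sH e 1 = S v * v"
    proof -
      have in4: "sum_list (map (\<lambda>y. sH c (S (fst y) * snd y)) (D r)) = sH (c * eps r) 1" for c r
      proof -
        have "sH (c * eps r) 1 = sH c (sum_list (map (\<lambda>(a, b). S a * b) (D r)))" by (simp add: ant)
        also have "\<dots> = sum_list (map (\<lambda>y. sH c (S (fst y) * snd y)) (D r))"
          by (simp add: sHr_sl split_def)
        finally show ?thesis by simp
      qed
      have L: "sum_list (map (\<lambda>(x, y, z). sH (eps x) (S y * z)) [(r1, b1, b2). (r1, r2) \<leftarrow> R, (b1, b2) \<leftarrow> D r2]) = sH e 1"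
        by (simp add: sum_list_concat_map e_def2 sHl_sl split_def comp_def in4)
      have RR: "sum_list (map (\<lambda>(x, y, z). sH (eps x) (S y * z)) [(r1 * r1', r2', r2). (r1, r2) \<leftarrow> R, (r1', r2') \<leftarrow> R]) = S v * v"
      proof -
        have "S v * v = sum_list (map (\<lambda>x. sum_list (map (\<lambda>y. S (g y) * g x) R)) R)"
          unfolding v_def by (simp only: ml_sl) (simp only: S_sl mr_sl)
        then show ?thesis by (simp add: sum_list_concat_map g_def split_def comp_def epsmul Sscl mult.commute flip: sHm1 sHm2)
      qed
      show ?thesis using ev4 L RR by simp
    qed
    have vv: "v = sH e 1"
    proof -
      have "sH e v = sH e 1 * v" by (simp flip: sHm1)
      also have "\<dots> = S v * (v * v)" by (simp add: U4 mult.assoc)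
      also have "\<dots> = sH e 1" using \<open>v = v * v\<close> U4 by simp
      finally show ?thesis using U3 by simp
    qed
    have e1: "sL e 1 = 1"
    proof -
      have "act v 1 = 1" by (rule U1)
      then show ?thesis by (simp add: vv act_sclx act_one)
    qed
    have d1: "dl 1 = map (\<lambda>x. (snd x, sL (eps (fst x)) 1)) R"
      by (simp add: dl_def act_unit split_def)
    have t1: "tens2_eq sH sL (map (\<lambda>x. (snd x, sL (eps (fst x)) 1)) R) (map (\<lambda>x. (sH (eps (fst x)) (snd x), 1)) R)"
      by (rule tens2_mapc) (rule tens2_scl)
    have t2: "tens2_eq sH sL [(v, 1)] (map (\<lambda>x. (sH (eps (fst x)) (snd x), 1)) R)"
      using tens2_sumA[of sH sL g R 1] by (simp add: v_def g_def split_def)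
    have t3: "tens2_eq sH sL [(1, sL e 1)] [(sH e 1, 1)]" by (rule tens2_scl)
    have t4: "tens2_eq sH sL (map (\<lambda>x. (snd x, sL (eps (fst x)) 1)) R) [(sH e 1, 1)]"
      using tens2_trans[OF t1 tens2_sym[OF t2]] by (simp add: vv)
    show ?thesis unfolding d1
      using tens2_trans[OF t4 tens2_sym[OF t3]] by (simp add: e1)
  qed
  have G_compat: "\<forall>x l. tens2_eq sH sL [(c * a2, m). (a1, a2) \<leftarrow> D x, (c, m) \<leftarrow> dl (act a1 l)]
                           [(a1 * c, act a2 m). (a1, a2) \<leftarrow> D x, (c, m) \<leftarrow> dl l]"
  proof (intro allI)
    fix x l
    define \<phi> where "\<phi> = (\<lambda>(p::'h, q::'h). (q, act p l))"
    define h where "h = (\<lambda>(r::'h \<times> 'h) (ab::'h \<times> 'h). (snd r * snd ab, act (fst r * fst ab) l))"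
    have T: "tens2_eq sH sL (map \<phi> [(r1 * a, r2 * b). (r1, r2) \<leftarrow> R, (a, b) \<leftarrow> D x])
                (map \<phi> [(b * r1, a * r2). (a, b) \<leftarrow> D x, (r1, r2) \<leftarrow> R])"
      apply (rule tens2_to2[OF Q1])
      apply (simp_all add: \<phi>_def act_addx act_sclx)
      apply (rule tnull2.intros)+
      done
    have e1: "map \<phi> [(r1 * a, r2 * b). (r1, r2) \<leftarrow> R, (a, b) \<leftarrow> D x] = concat (map (\<lambda>r. map (h r) (D x)) R)"
      unfolding h_def \<phi>_def by (simp add: map_concat split_def comp_def)
    have e2: "[(c * a2, m). (a1, a2) \<leftarrow> D x, (c, m) \<leftarrow> dl (act a1 l)] = concat (map (\<lambda>ab. map (\<lambda>r. h r ab) R) (D x))"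
      unfolding h_def dl_def by (simp add: map_concat split_def comp_def act_mul)
    have e3: "map \<phi> [(b * r1, a * r2). (a, b) \<leftarrow> D x, (r1, r2) \<leftarrow> R] = [(a1 * c, act a2 m). (a1, a2) \<leftarrow> D x, (c, m) \<leftarrow> dl l]"
      unfolding dl_def \<phi>_def by (simp add: map_concat split_def comp_def act_mul)
    have P: "tens2_eq sH sL (concat (map (\<lambda>ab. map (\<lambda>r. h r ab) R) (D x))) (concat (map (\<lambda>r. map (h r) (D x)) R))"
      by (rule tens2_perm) (rule mset_swap[symmetric])
    show "tens2_eq sH sL [(c * a2, m). (a1, a2) \<leftarrow> D x, (c, m) \<leftarrow> dl (act a1 l)]
                           [(a1 * c, act a2 m). (a1, a2) \<leftarrow> D x, (c, m) \<leftarrow> dl l]"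
      unfolding e2 using tens2_trans[OF P T[unfolded e1 e3]] .
  qed
  have G_prod: "\<forall>l1 l2. l1 * l2 = sum_list (map (\<lambda>(c, m). act c l2 * m) (dl l1))"
  proof (intro allI)
    fix l1 l2
    have "map (\<lambda>(c, m). act c l2 * m) (dl l1) = map (\<lambda>(r1, r2). act r2 l2 * act r1 l1) R"
      by (simp add: dl_def split_def)
    then show "l1 * l2 = sum_list (map (\<lambda>(c, m). act c l2 * m) (dl l1))" using QC by simp
  qed
  show ?thesis
    unfolding base_algebra_def comodule_algebra_def dl_def[symmetric]
    using assms(3) kL G_add G_scl G_coass G_cu G_mul G_unit G_compat G_prod by blast
qed

end
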